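(* Let $\beta,p,q>0$ with $\beta p>1$, let $F$ be the CDF of the Singh-Maddala distribution $GBP(1,\beta,p,q)$, and let $y>0$. Then $$\mathrm{CRPS}(F\mid y) = q\,\frac{\Gamma\!\left(2\beta-\frac1p\right)\Gamma\!\left(1+\frac1p\right)}{\Gamma(2\beta)} + y\left(1-\frac{2q^{\beta p}}{(q^p+y^p)^{\beta}}\;{}_2F_1\!\left(1,\beta;1+\tfrac1p;\frac{y^p}{y^p+q^p}\right)\right).$$
   Context: The generalized Beta-prime distribution $GBP(\alpha,\beta,p,q)$ with parameters $\alpha,\beta,p,q>0$ is the distribution on $(0,\infty)$ with density $p_Z(z)=\frac{p}{qB(\alpha,\beta)}\frac{(z/q)^{\alpha p-1}}{(1+(z/q)^p)^{\alpha+\beta}}$ for $z>0$; the Singh-Maddala distribution is the case $\alpha=1$. For a CDF $F$ and observation $y\in\mathbb R$, $\mathrm{CRPS}(F\mid y)=\int_{\mathbb R}(F(x)-H(x-y))^2\,dx$ with $H$ the Heaviside step function. ${}_2F_1$ is the Gauss hypergeometric function. *)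

theory Defs
  imports "HOL-Analysis.Analysis"
begin

definition gbp_pdf :: "real \<Rightarrow> real \<Rightarrow> real \<Rightarrow> real \<Rightarrow> real \<Rightarrow> real" where
  "gbp_pdf \<alpha> \<beta> p q z =
     (if z > 0 then p / (q * Beta \<alpha> \<beta>) * (z / q) powr (\<alpha> * p - 1)
                    / (1 + (z / q) powr p) powr (\<alpha> + \<beta>)
      else 0)"

definition gbp_cdf :: "real \<Rightarrow> real \<Rightarrow> real \<Rightarrow> real \<Rightarrow> real \<Rightarrow> real" where
  "gbp_cdf \<alpha> \<beta> p q x = (LINT t:{..x}|lborel. gbp_pdf \<alpha> \<beta> p q t)"

definition heaviside :: "real \<Rightarrow> real" where
  "heaviside x = (if x \<ge> 0 then 1 else 0)"

definition crps_integrand :: "(real \<Rightarrow> real) \<Rightarrow> real \<Rightarrow> real \<Rightarrow> real" where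
  "crps_integrand F y x = (F x - heaviside (x - y))\<^sup>2"

definition CRPS :: "(real \<Rightarrow> real) \<Rightarrow> real \<Rightarrow> real" where
  "CRPS F y = (LINT x|lborel. crps_integrand F y x)"

text \<open>Gauss hypergeometric function as its power series (used for |z| < 1).\<close>
definition hyp2F1 :: "real \<Rightarrow> real \<Rightarrow> real \<Rightarrow> real \<Rightarrow> real" where
  "hyp2F1 a b c z = (\<Sum>n. pochhammer a n * pochhammer b n / (pochhammer c n * fact n) * z ^ n)"

end

theory Submission
  imports Defs "HOL-Real_Asymp.Real_Asymp"
begin


definition hc :: "real \<Rightarrow> real \<Rightarrow> nat \<Rightarrow> real" where
  "hc b c n = pochhammer b n / pochhammer c n"

lemma hc_pos: "b > 0 \<Longrightarrow> c > 0 \<Longrightarrow> hc b c n > 0"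
  unfolding hc_def by (intro divide_pos_pos pochhammer_pos)

lemma hc_Suc: "c > 0 \<Longrightarrow> hc b c (Suc n) = hc b c n * (b + n) / (c + n)"
  unfolding hc_def pochhammer_Suc by simp

lemma hyp2F1_hc: "hyp2F1 1 b c z = (\<Sum>n. hc b c n * z ^ n)"
  unfolding hyp2F1_def hc_def by (simp add: pochhammer_fact[symmetric])

lemma conv_radius_hc:
  assumes "b > 0" "c > 0"
  shows "conv_radius (hc b c) = 1"
proof (rule conv_radius_ratio_limit_nonzero[of _ 1])
  have "(\<lambda>n. norm (hc b c n) / norm (hc b c (Suc n))) = (\<lambda>n. (c + real n) / (b + real n))"
  proof
    fix n
    have "hc b c n > 0" using hc_pos assms by blast
    moreover have "b + real n > 0" "c + real n > 0" using assms by auto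
    moreover have "hc b c (Suc n) > 0" using hc_pos assms by blast
    ultimately show "norm (hc b c n) / norm (hc b c (Suc n)) = (c + real n) / (b + real n)"
      using assms by (simp add: hc_Suc divide_simps)
  qed
  moreover have "(\<lambda>n. (c + real n) / (b + real n)) \<longlonglongrightarrow> 1" by real_asymp
  ultimately show "(\<lambda>n. norm (hc b c n) / norm (hc b c (Suc n))) \<longlonglongrightarrow> 1" by simp
qed auto

lemma hc_summable:
  assumes "b > 0" "c > 0" "\<bar>z\<bar> < 1"
  shows "summable (\<lambda>n. hc b c n * z ^ n)"
  by (rule summable_in_conv_radius) (use assms conv_radius_hc[OF assms(1,2)] in simp)

lemma hc_deriv:
  assumes "b > 0" "c > 0" "\<bar>z\<bar> < 1"
  shows "((\<lambda>z. \<Sum>n. hc b c n * z ^ n) has_field_derivative (\<Sum>n. diffs (hc b c) n * z ^ n)) (at z)"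
  by (rule has_field_derivative_powser) (use assms conv_radius_hc[OF assms(1,2)] in simp)

lemma hc_ode:
  assumes "b > 0" "p > 0" "\<bar>z\<bar> < 1"
  defines "c \<equiv> 1 + 1 / p"
  shows "z * (1 - z) * (\<Sum>n. diffs (hc b c) n * z ^ n) + (1/p - b * z) * (\<Sum>n. hc b c n * z ^ n) = 1/p"
proof -
  have c: "c > 0" using assms by (simp add: c_def add_pos_pos)
  define h where "h = hc b c"
  define H where "H = (\<Sum>n. h n * z ^ n)"
  define D where "D = (\<Sum>n. diffs h n * z ^ n)"
  have sH: "(\<lambda>n. h n * z ^ n) sums H"
    unfolding H_def h_def using hc_summable[OF assms(1) c assms(3)] by (simp add: summable_sums)
  have sD0: "summable (\<lambda>n. diffs h n * z ^ n)"
    unfolding h_def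
    by (rule termdiff_converges[of z 1]) (use assms hc_summable[OF assms(1) c] in auto)
  hence sD: "(\<lambda>n. diffs h n * z ^ n) sums D" unfolding D_def by (simp add: summable_sums)
  have "(\<lambda>n. z * (diffs h n * z ^ n)) sums (z * D)" by (rule sums_mult[OF sD])
  hence "(\<lambda>n. real (Suc n) * h (Suc n) * z ^ Suc n) sums (z * D)"
    by (simp add: diffs_def mult_ac)
  hence sA: "(\<lambda>n. real n * h n * z ^ n) sums (z * D)"
    using sums_Suc_iff[of "\<lambda>n. real n * h n * z ^ n" "z * D"] by simp
  define T where "T n = (real n + 1/p) * h n * z ^ n" for n
  have sT: "T sums (z * D + H / p)"
    unfolding T_def using sums_add[OF sA sums_mult2[OF sH, of "1/p"]]
    by (simp add: algebra_simps)
  have "(\<lambda>n. T (Suc n)) sums (z * (z * D) + z * (b * H))"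
  proof -
    have "(\<lambda>n. z * (real n * h n * z ^ n + b * (h n * z ^ n))) sums (z * (z * D) + z * (b * H))"
      using sums_mult[OF sums_add[OF sA sums_mult[OF sH, of b]], of z] by (simp add: algebra_simps)
    moreover have "T (Suc n) = z * (real n * h n * z ^ n + b * (h n * z ^ n))" for n
    proof -
      have "c + real n > 0" using c by simp
      hence "(real (Suc n) + 1/p) * h (Suc n) = (b + n) * h n"
        unfolding h_def using hc_Suc[OF c, of b n] by (simp add: c_def field_simps)
      thus ?thesis unfolding T_def by (simp add: algebra_simps)
    qed
    ultimately show ?thesis by simp
  qed
  hence "T sums (z * (z * D) + z * (b * H) + T 0)" by (simp add: sums_Suc_iff)
  hence "z * D + H / p = z * (z * D) + z * (b * H) + T 0" using sT sums_unique2 by blast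
  moreover have "T 0 = 1 / p" unfolding T_def h_def hc_def by simp
  ultimately show ?thesis unfolding H_def D_def h_def by (simp add: algebra_simps)
qed



definition Sf :: "real \<Rightarrow> real \<Rightarrow> real \<Rightarrow> real \<Rightarrow> real" where
  "Sf b p q x = (1 + (x / q) powr p) powr (- b)"

lemma u_deriv:
  assumes "x > 0" "q > 0"
  shows "((\<lambda>x. (x/q) powr p) has_real_derivative (p * (x/q) powr p / x)) (at x)"
proof -
  have "((\<lambda>x. (x/q) powr p) has_real_derivative (p * (x/q) powr (p - 1) * (1/q))) (at x)"
    using assms by (auto intro!: derivative_eq_intros)
  moreover have "(x/q) powr (p - 1) = (x/q) powr p / (x/q)"
    using assms by (simp add: powr_diff)
  ultimately show ?thesis using assms by (simp add: field_simps)
qed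

lemma S_deriv:
  assumes "x > 0" "q > 0"
  shows "(Sf b p q has_real_derivative (- b * Sf b p q x / (1 + (x/q) powr p) * (p * (x/q) powr p / x))) (at x)"
proof -
  let ?U = "(x/q) powr p"
  have U: "?U \<ge> 0" by simp
  have pi: "(x/q) powr (p - 1) = (x/q) powr p / (x/q)"
    using assms by (simp add: powr_diff)
  have "(Sf b p q has_real_derivative ((- b) * (1 + ?U) powr (- b - 1) * (p * ?U / x))) (at x)"
    unfolding Sf_def
    using U assms by (auto intro!: derivative_eq_intros simp: pi add_pos_nonneg field_simps)
  moreover have "(1 + ?U) powr (- b - 1) = (1 + ?U) powr (- b) / (1 + ?U)"
    using U by (simp add: powr_diff)
  ultimately show ?thesis unfolding Sf_def by (simp add: field_simps)
qed

definition zf :: "real \<Rightarrow> real \<Rightarrow> real \<Rightarrow> real" where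
  "zf p q x = (x / q) powr p / (1 + (x / q) powr p)"

definition Hs :: "real \<Rightarrow> real \<Rightarrow> real \<Rightarrow> real" where
  "Hs b p w = (\<Sum>n. hc b (1 + 1/p) n * w ^ n)"

definition Dh :: "real \<Rightarrow> real \<Rightarrow> real \<Rightarrow> real" where
  "Dh b p w = (\<Sum>n. diffs (hc b (1 + 1/p)) n * w ^ n)"

lemma zf_range: "q > 0 \<Longrightarrow> 0 \<le> zf p q x \<and> zf p q x < 1"
  unfolding zf_def by (auto simp: add_pos_nonneg divide_simps)

lemma alg1: "(x::real) \<noteq> 0 \<Longrightarrow> 1 + U \<noteq> 0 \<Longrightarrow>
  ((p*U/x)*(1+U) - U*(p*U/x)) / ((1+U)*(1+U)) = (p*U/x)/(1+U)^2"
  by (simp add: field_simps power2_eq_square)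

lemma alg2: "(x::real) \<noteq> 0 \<Longrightarrow> 1 + U \<noteq> 0 \<Longrightarrow> p \<noteq> 0 \<Longrightarrow>
  (1*S + (-b*S/(1+U)*(p*U/x))*x)*H + (D*((p*U/x)/(1+U)^2))*(x*S)
   = S*p*((U/(1+U))*(1/(1+U))*D + (1/p - b*(U/(1+U)))*H)"
proof -
  assume a: "x \<noteq> 0" "1 + U \<noteq> 0" "p \<noteq> 0"
  define V where "V = 1 + U"
  have "V \<noteq> 0" using a V_def by simp
  hence "(1*S + (-b*S/V*(p*U/x))*x)*H + (D*((p*U/x)/V^2))*(x*S)
   = S*p*((U/V)*(1/V)*D + (1/p - b*(U/V))*H)"
    using a by (simp add: field_simps power2_eq_square)
  thus ?thesis unfolding V_def .
qed

lemma z_deriv: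
  assumes "x > 0" "q > 0"
  shows "(zf p q has_real_derivative ((p * (x/q) powr p / x) / (1 + (x/q) powr p)^2)) (at x)"
proof -
  let ?U = "(x/q) powr p"
  have U: "?U \<ge> 0" by simp
  have "(zf p q has_real_derivative ((p * ?U / x) * (1 + ?U) - ?U * (p * ?U / x)) / ((1 + ?U) * (1 + ?U))) (at x)"
    unfolding zf_def
  proof (rule DERIV_divide[OF u_deriv[OF assms]])
    show "((\<lambda>x. 1 + (x/q) powr p) has_real_derivative (p * ?U / x)) (at x)"
      using DERIV_add[OF DERIV_const u_deriv[OF assms]] by simp
  next
    show "1 + ?U \<noteq> 0" using U by linarith
  qed
  moreover have "1 + ?U \<noteq> 0" using U by linarith
  ultimately show ?thesis using alg1[of x ?U p] assms by simp
qed

lemma H_deriv: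
  assumes "b > 0" "p > 0" "\<bar>w\<bar> < 1"
  shows "(Hs b p has_real_derivative Dh b p w) (at w)"
proof -
  have c: "1 + 1/p > 0" using assms by (simp add: add_pos_pos)
  show ?thesis unfolding Hs_def Dh_def by (rule hc_deriv[OF assms(1) c assms(3)])
qed

lemma H_ode:
  assumes "b > 0" "p > 0" "\<bar>w\<bar> < 1"
  shows "w * (1 - w) * Dh b p w + (1/p - b * w) * Hs b p w = 1/p"
  unfolding Hs_def Dh_def using hc_ode[OF assms] by simp

lemma G_deriv:
  assumes "b > 0" "p > 0" "q > 0" "x > 0"
  shows "((\<lambda>x. x * Sf b p q x * Hs b p (zf p q x)) has_real_derivative Sf b p q x) (at x)"
proof -
  let ?U = "(x/q) powr p"
  let ?z = "zf p q x"
  have U: "?U \<ge> 0" by simp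
  have zr: "\<bar>?z\<bar> < 1" using zf_range[OF assms(3), of p x] by auto
  have d: "((\<lambda>x. x * Sf b p q x * Hs b p (zf p q x)) has_real_derivative
     ((1 * Sf b p q x + (- b * Sf b p q x / (1 + ?U) * (p * ?U / x)) * x) * Hs b p ?z
      + (Dh b p ?z * ((p * ?U / x) / (1 + ?U)^2)) * (x * Sf b p q x))) (at x)"
    by (intro DERIV_mult DERIV_ident S_deriv assms DERIV_chain2[OF H_deriv z_deriv] zr)
  have ode: "?z * (1 - ?z) * Dh b p ?z + (1/p - b * ?z) * Hs b p ?z = 1/p"
    by (rule H_ode[OF assms(1,2) zr])
  have pos: "1 + ?U > 0" using U by linarith
  have z1: "1 - ?z = 1 / (1 + ?U)" unfolding zf_def using pos by (simp add: divide_simps)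
  have e: "(1 * Sf b p q x + (- b * Sf b p q x / (1 + ?U) * (p * ?U / x)) * x) * Hs b p ?z
      + (Dh b p ?z * ((p * ?U / x) / (1 + ?U)^2)) * (x * Sf b p q x)
      = Sf b p q x * p * (?z * (1 - ?z) * Dh b p ?z + (1/p - b * ?z) * Hs b p ?z)"
    unfolding z1 using assms pos alg2[of x ?U p "Sf b p q x" b "Hs b p ?z" "Dh b p ?z"] by (simp add: zf_def)
  show ?thesis using d unfolding e ode using assms by simp
qed



lemma U_lim0:
  fixes p q :: real
  assumes "p > 0" "q > 0"
  shows "((\<lambda>x. (x/q) powr p) \<longlongrightarrow> 0) (at_right 0)"
proof -
  have ev: "\<forall>\<^sub>F x in at_right (0::real). 0 \<le> x / q"
    using assms by (auto simp: eventually_at_filter)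
  have "((\<lambda>x. (x/q) powr p) \<longlongrightarrow> (0/q) powr p) (at_right 0)"
    by (rule tendsto_powr') (use assms ev in \<open>auto intro!: tendsto_eq_intros\<close>)
  thus ?thesis by simp
qed

lemma S_lim0:
  assumes "p > 0" "q > 0"
  shows "(Sf b p q \<longlongrightarrow> 1) (at_right 0)"
proof -
  have "((\<lambda>x. (1 + (x/q) powr p) powr (- b)) \<longlongrightarrow> (1 + 0) powr (- b)) (at_right 0)"
    by (intro tendsto_powr tendsto_add tendsto_const U_lim0 assms) simp
  thus ?thesis unfolding Sf_def by simp
qed

lemma S_pos: "q > 0 \<Longrightarrow> Sf b p q x > 0"
proof -
  have "0 \<le> (x/q) powr p" by simp
  hence "1 + (x/q) powr p > 0" by linarith
  thus ?thesis unfolding Sf_def by simp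
qed

lemma S_le1: "b > 0 \<Longrightarrow> Sf b p q x \<le> 1"
  unfolding Sf_def by (simp add: powr_minus divide_simps ge_one_powr_ge_zero add_pos_nonneg)

lemma z_lim0:
  assumes "p > 0" "q > 0"
  shows "(zf p q \<longlongrightarrow> 0) (at_right 0)"
proof -
  have "((\<lambda>x. (x/q) powr p / (1 + (x/q) powr p)) \<longlongrightarrow> 0 / (1 + 0)) (at_right 0)"
    by (intro tendsto_divide tendsto_add tendsto_const U_lim0 assms) simp
  thus ?thesis unfolding zf_def by simp
qed

lemma G_lim0:
  assumes "b > 0" "p > 0" "q > 0"
  shows "((\<lambda>x. x * Sf b p q x * Hs b p (zf p q x)) \<longlongrightarrow> 0) (at_right 0)"
proof -
  have c: "isCont (Hs b p) 0"
    using H_deriv[OF assms(1,2), of 0] by (simp add: DERIV_isCont)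
  have "((\<lambda>x. x * Sf b p q x * Hs b p (zf p q x)) \<longlongrightarrow> 0 * 1 * Hs b p 0) (at_right 0)"
    by (intro tendsto_mult tendsto_ident_at S_lim0 assms isCont_tendsto_compose[OF c] z_lim0)
  thus ?thesis by simp
qed

lemma S_isCont: "x > 0 \<Longrightarrow> q > 0 \<Longrightarrow> isCont (Sf b p q) x"
  using S_deriv DERIV_isCont by blast

lemma G_isCont:
  assumes "b > 0" "p > 0" "q > 0" "x > 0"
  shows "isCont (\<lambda>x. x * Sf b p q x * Hs b p (zf p q x)) x"
  using G_deriv[OF assms] DERIV_isCont by blast

lemma S_integral:
  assumes "b > 0" "p > 0" "q > 0" "y > 0"
  shows "set_integrable lborel {0<..<y} (Sf b p q)"
    "(LBINT x=0..y. Sf b p q x) = y * Sf b p q y * Hs b p (zf p q y)"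
proof -
  let ?G = "\<lambda>x. x * Sf b p q x * Hs b p (zf p q x)"
  have A: "((?G \<circ> real_of_ereal) \<longlongrightarrow> 0) (at_right (ereal 0))"
    unfolding ereal_tendsto_simps by (rule G_lim0[OF assms(1-3)])
  have B: "((?G \<circ> real_of_ereal) \<longlongrightarrow> ?G y) (at_left (ereal y))"
    unfolding ereal_tendsto_simps
    using G_isCont[OF assms] by (simp add: isCont_def filterlim_at_split)
  have r: "set_integrable lborel (einterval (ereal 0) (ereal y)) (Sf b p q)"
     "(LBINT x=ereal 0..ereal y. Sf b p q x) = ?G y - 0"
    by (rule interval_integral_FTC_nonneg[OF _ _ _ _ A B];
        use assms in \<open>auto intro: G_deriv S_isCont less_imp_le[OF S_pos]\<close>)+
  show "set_integrable lborel {0<..<y} (Sf b p q)" using r(1) by simp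
  show "(LBINT x=0..y. Sf b p q x) = ?G y" using r(2) by (simp add: zero_ereal_def)
qed



lemma g_lim1:
  fixes p q :: real
  assumes "p > 0" "q > 0"
  shows "filterlim (\<lambda>t. q * (t/(1-t)) powr (1/p)) at_top (at_left 1)"
  using assms by real_asymp

lemma g_lim0:
  fixes p q :: real
  assumes "p > 0" "q > 0"
  shows "((\<lambda>t. q * (t/(1-t)) powr (1/p)) \<longlongrightarrow> 0) (at_right 0)"
  using assms by real_asymp

lemma g_deriv:
  fixes p q t :: real
  assumes "p > 0" "q > 0" "0 < t" "t < 1"
  shows "((\<lambda>t. q * (t/(1-t)) powr (1/p)) has_real_derivative
           (q / p * t powr (1/p - 1) * (1-t) powr (-1/p - 1))) (at t)"
proof -
  have d1: "((\<lambda>t. t/(1-t)) has_real_derivative (1 / (1-t)^2)) (at t)"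
    using assms by (auto intro!: derivative_eq_intros simp: field_simps power2_eq_square)
  have pos: "t/(1-t) > 0" using assms by simp
  have "((\<lambda>t. q * (t/(1-t)) powr (1/p)) has_real_derivative
           (q * ((1/p) * (t/(1-t)) powr (1/p - of_nat 1) * (1 / (1-t)^2)))) (at t)"
    by (intro DERIV_cmult DERIV_fun_powr d1 pos)
  moreover have "(t/(1-t)) powr (1/p - 1) = t powr (1/p - 1) / (1-t) powr (1/p - 1)"
    using assms by (simp add: powr_divide)
  moreover have "(1-t) powr (-1/p - 1) = 1 / ((1-t) powr (1/p - 1) * (1-t)^2)"
  proof -
    have e: "-1/p - 1 = -(1/p - 1) + (-2::real)" by (simp add: field_simps)
    have "(1-t) powr (-1/p - 1) = (1-t) powr (-(1/p - 1) + (-2))" by (simp only: e)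
    also have "\<dots> = (1-t) powr (-(1/p - 1)) * (1-t) powr (-2)" by (rule powr_add)
    also have "(1-t) powr (-2) = 1 / (1-t)^2"
      using assms by (simp add: powr_minus powr_realpow divide_inverse)
    finally show ?thesis unfolding powr_minus using assms by (simp add: divide_inverse)
  qed
  ultimately show ?thesis by (simp add: mult_ac)
qed

lemma Sg_eq:
  fixes p q t b :: real
  assumes "p > 0" "q > 0" "0 < t" "t < 1"
  shows "Sf b p q (q * (t/(1-t)) powr (1/p)) = (1-t) powr b"
proof -
  have "(q * (t/(1-t)) powr (1/p)) / q = (t/(1-t)) powr (1/p)" using assms by simp
  moreover have "((t/(1-t)) powr (1/p)) powr p = t/(1-t)"
    using assms by (simp add: powr_powr)
  moreover have "1 + t/(1-t) = 1/(1-t)" using assms by (simp add: field_simps)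
  ultimately have "Sf b p q (q * (t/(1-t)) powr (1/p)) = (1/(1-t)) powr (-b)"
    unfolding Sf_def by simp
  also have "\<dots> = inverse ((1/(1-t)) powr b)" by (rule powr_minus)
  also have "(1/(1-t)) powr b = 1 / (1-t) powr b" using assms by (simp add: powr_divide)
  also have "inverse (1 / (1-t) powr b) = (1-t) powr b" by simp
  finally show ?thesis .
qed

lemma fg_eq:
  fixes p q t b :: real
  assumes "p > 0" "q > 0" "0 < t" "t < 1"
  shows "(Sf b p q (q * (t/(1-t)) powr (1/p)))^2 * (q / p * t powr (1/p - 1) * (1-t) powr (-1/p - 1))
       = q / p * (t powr (1/p - 1) * (1-t) powr (2*b - 1/p - 1))"
proof -
  have "((1-t) powr b)^2 * (1-t) powr (-1/p - 1) = (1-t) powr b * (1-t) powr b * (1-t) powr (-1/p - 1)"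
    by (simp add: power2_eq_square)
  also have "\<dots> = (1-t) powr (b + b + (-1/p - 1))"
    by (simp only: powr_add[symmetric])
  also have "b + b + (-1/p - 1) = 2*b - 1/p - 1" by simp
  finally have k: "((1-t) powr b)^2 * (1-t) powr (-1/p - 1) = (1-t) powr (2*b - 1/p - 1)" .
  have "(Sf b p q (q * (t/(1-t)) powr (1/p)))^2 * (q / p * t powr (1/p - 1) * (1-t) powr (-1/p - 1))
     = q / p * (t powr (1/p - 1) * (((1-t) powr b)^2 * (1-t) powr (-1/p - 1)))"
    unfolding Sg_eq[OF assms] by (simp only: mult_ac)
  thus ?thesis unfolding k .
qed



lemma S2_integral:
  fixes b p q :: real
  assumes b: "b > 0" and p: "p > 0" and q: "q > 0" and bp: "b * p > 1"
  shows "set_integrable lborel {0<..} (\<lambda>x. (Sf b p q x)^2)"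
    "(LINT x:{0<..}|lborel. (Sf b p q x)^2) = q * Gamma (2 * b - 1 / p) * Gamma (1 + 1 / p) / Gamma (2 * b)"
proof -
  define g where "g t = q * (t/(1-t)) powr (1/p)" for t :: real
  define g' where "g' t = q / p * t powr (1/p - 1) * (1-t) powr (-1/p - 1)" for t :: real
  define f where "f x = (Sf b p q x)^2" for x
  define B where "B t = t powr (1/p - 1) * (1-t) powr (2*b - 1/p - 1)" for t :: real
  have a1: "1/p > 0" using p by simp
  have a2: "2*b - 1/p > 0"
  proof -
    have "1/p < b" using bp p by (simp add: field_simps)
    thus ?thesis using b by simp
  qed
  have BI: "set_integrable lborel {0..1} B"
    using integrable_Beta[OF a1 a2] unfolding B_def by simp
  have e01: "einterval 0 1 = {0<..<(1::real)}" by (auto simp: einterval_def)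
  have "set_integrable lborel {0<..<1} B" by (rule set_integrable_subset[OF BI]) auto
  hence BI': "set_integrable lborel (einterval 0 1) (\<lambda>t. q / p * B t)"
    unfolding e01 by (rule set_integrable_mult_right)
  have eqfg: "f (g t) * g' t = q / p * B t" if "t \<in> einterval 0 1" for t
    using that fg_eq[OF p q, of t b] by (simp add: f_def g_def g'_def B_def zero_ereal_def einterval_def)
  have fgI: "set_integrable lborel (einterval 0 1) (\<lambda>t. f (g t) * g' t)"
    using BI' by (subst set_integrable_cong[OF refl refl eqfg]) auto
  have c1: "DERIV g x :> g' x" if "0 < ereal x" "ereal x < 1" for x
      using that g_deriv[OF p q, of x] unfolding g_def g'_def by simp
  have c2: "isCont f (g x)" if "0 < ereal x" "ereal x < 1" for x
    proof -
      have "g x > 0" using that q unfolding g_def by simp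
      thus ?thesis unfolding f_def using S_isCont[OF _ q] by (intro continuous_intros) auto
    qed
  have c3: "isCont g' x" if "0 < ereal x" "ereal x < 1" for x
      using that unfolding g'_def by (intro continuous_intros) auto
  have c4: "0 \<le> f (g x)" for x unfolding f_def by simp
  have c5: "0 \<le> g' x" for x unfolding g'_def using p q by simp
  have c6: "((ereal \<circ> g \<circ> real_of_ereal) \<longlongrightarrow> 0) (at_right 0)"
      unfolding zero_ereal_def ereal_tendsto_simps using g_lim0[OF p q] unfolding g_def by simp
  have c7: "((ereal \<circ> g \<circ> real_of_ereal) \<longlongrightarrow> \<infinity>) (at_left 1)"
      unfolding one_ereal_def ereal_tendsto_simps using g_lim1[OF p q] unfolding g_def by simp
  have lt: "(0::ereal) < 1" by simp
  note sub = interval_integral_substitution_nonneg[OF lt c1 c2 c3 c4 c5 c6 c7 fgI]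
  have "(LBINT t=0..1. f (g t) * g' t) = (LBINT t=0..1. q / p * B t)"
    by (rule interval_integral_cong) (use eqfg in simp)
  also have "\<dots> = q / p * (LBINT t=0..1. B t)" by simp
  also have "(LBINT t=0..1. B t) = (LBINT t:{0..1}. B t)"
    using interval_integral_Icc[of 0 1 B] by (simp add: zero_ereal_def one_ereal_def)
  also have "\<dots> = integral {0..1} B" by (rule set_borel_integral_eq_integral(2)[OF BI])
  also have "\<dots> = Beta (1/p) (2*b - 1/p)"
    using has_integral_Beta_real[OF a1 a2] unfolding B_def by (simp add: integral_unique)
  finally have v: "(LBINT t=0..1. f (g t) * g' t) = q / p * Beta (1/p) (2*b - 1/p)" .
  have G: "Gamma (1 + 1/p) = 1/p * Gamma (1/p)"
  proof -
    have "1/p \<notin> \<int>\<^sub>\<le>\<^sub>0" using a1 nonpos_Ints_nonpos by force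
    thus ?thesis using Gamma_plus1[of "1/p"] by (simp add: add.commute)
  qed
  have "q / p * Beta (1/p) (2*b - 1/p) = q * Gamma (2 * b - 1 / p) * Gamma (1 + 1 / p) / Gamma (2 * b)"
    unfolding G Beta_def by simp
  show "set_integrable lborel {0<..} (\<lambda>x. (Sf b p q x)^2)"
    using sub(1) unfolding f_def by (simp add: zero_ereal_def)
  show "(LINT x:{0<..}|lborel. (Sf b p q x)^2) = q * Gamma (2 * b - 1 / p) * Gamma (1 + 1 / p) / Gamma (2 * b)"
    using sub(2) v \<open>q / p * _ = _\<close> interval_lebesgue_integral_0_infty(2)[of lborel f]
    unfolding f_def by simp
qed



lemma Beta1: "b > 0 \<Longrightarrow> Beta 1 (b::real) = 1 / b"
proof -
  assume b: "b > 0"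
  have "b \<notin> \<int>\<^sub>\<le>\<^sub>0" using b nonpos_Ints_nonpos by force
  hence "Gamma (b + 1) = b * Gamma b" by (rule Gamma_plus1)
  moreover have "Gamma b > 0" using b by simp
  ultimately show ?thesis unfolding Beta_def by (simp add: add.commute)
qed

lemma pdf_eq:
  fixes b p q t :: real
  assumes b: "b > 0" and q: "q > 0" and t: "t > 0"
  shows "gbp_pdf 1 b p q t = b * Sf b p q t / (1 + (t/q) powr p) * (p * (t/q) powr p / t)"
proof -
  let ?U = "(t/q) powr p"
  have pos: "1 + ?U > 0" using powr_ge_zero[of "t/q" p] by linarith
  have e1: "(t/q) powr (1 * p - 1) = ?U / (t/q)" using t q by (simp add: powr_diff)
  have e2: "(1 + ?U) powr (1 + b) = (1 + ?U) * (1 + ?U) powr b" using pos by (simp add: powr_add)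
  have e3: "Sf b p q t = 1 / (1 + ?U) powr b" unfolding Sf_def using pos by (simp add: powr_minus divide_inverse)
  have "(1 + ?U) powr b > 0" using pos by simp
  thus ?thesis unfolding gbp_pdf_def e1 e2 e3 Beta1[OF b] using t q b pos by (simp add: field_simps)
qed

lemma pdf_nonneg:
  fixes b p q t :: real
  assumes b: "b > 0" and p: "p > 0" and q: "q > 0"
  shows "gbp_pdf 1 b p q t \<ge> 0"
proof (cases "t > 0")
  case True
  have pos: "1 + (t/q) powr p > 0" using powr_ge_zero[of "t/q" p] by linarith
  show ?thesis unfolding pdf_eq[OF b q True] using S_pos[OF q, of b p t] pos b p True by simp
qed (simp add: gbp_pdf_def)

lemma cdf_pos:
  fixes b p q x :: real
  assumes b: "b > 0" and p: "p > 0" and q: "q > 0" and x: "x > 0"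
  shows "gbp_cdf 1 b p q x = 1 - Sf b p q x"
proof -
  let ?f = "gbp_pdf 1 b p q"
  let ?F = "\<lambda>t. - Sf b p q t"
  let ?E = "\<lambda>t. b * Sf b p q t / (1 + (t/q) powr p) * (p * (t/q) powr p / t)"
  have c1: "DERIV ?F t :> ?f t" if "ereal 0 < ereal t" "ereal t < ereal x" for t
  proof -
    have t: "t > 0" using that by simp
    show ?thesis using DERIV_minus[OF S_deriv[OF t q, of b p]] unfolding pdf_eq[OF b q t] by simp
  qed
  have c2: "isCont ?f t" if "ereal 0 < ereal t" "ereal t < ereal x" for t
  proof -
    have t: "t > 0" using that by simp
    have ev: "\<forall>\<^sub>F s in nhds t. ?f s = ?E s"
      using eventually_nhds_in_open[of "{0<..}" t] t
      by (auto elim!: eventually_mono simp: pdf_eq[OF b q])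
    have pos: "1 + (t/q) powr p > 0" using powr_ge_zero[of "t/q" p] by linarith
    have "isCont ?E t"
      using t q pos S_isCont[OF t q, of b p] by (intro continuous_intros) auto
    thus ?thesis using isCont_cong[OF ev] by simp
  qed
  have c3: "AE t in lborel. ereal 0 < ereal t \<longrightarrow> ereal t < ereal x \<longrightarrow> 0 \<le> ?f t"
    using pdf_nonneg[OF b p q] by simp
  have c4: "((?F \<circ> real_of_ereal) \<longlongrightarrow> -1) (at_right (ereal 0))"
    unfolding ereal_tendsto_simps using tendsto_minus[OF S_lim0[OF p q, of b]] by simp
  have c5: "((?F \<circ> real_of_ereal) \<longlongrightarrow> ?F x) (at_left (ereal x))"
    unfolding ereal_tendsto_simps using S_isCont[OF x q, of b p]
    by (intro tendsto_minus) (simp add: isCont_def filterlim_at_split)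
  have lt: "ereal 0 < ereal x" using x by simp
  have r: "(LBINT t=ereal 0..ereal x. ?f t) = 1 - Sf b p q x"
    using interval_integral_FTC_nonneg(2)[OF lt c1 c2 c3 c4 c5] by simp
  have "gbp_cdf 1 b p q x = (LBINT t:{0<..x}. ?f t)"
    unfolding gbp_cdf_def set_lebesgue_integral_def
    by (rule Bochner_Integration.integral_cong) (auto simp: indicator_def gbp_pdf_def)
  also have "\<dots> = (LBINT t=ereal 0..ereal x. ?f t)"
    using interval_integral_Ioc[of 0 x ?f] x by simp
  finally show ?thesis using r by simp
qed

lemma cdf_nonpos:
  fixes b p q x :: real
  assumes "x \<le> 0"
  shows "gbp_cdf 1 b p q x = 0"
proof -
  have "(\<lambda>t. indicator {..x} t *\<^sub>R gbp_pdf 1 b p q t) = (\<lambda>t. 0)"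
    using assms by (auto simp: indicator_def gbp_pdf_def)
  thus ?thesis unfolding gbp_cdf_def set_lebesgue_integral_def by simp
qed



theorem corollary1:
  fixes \<beta> p q y :: real
  assumes "\<beta> > 0" and "p > 0" and "q > 0" and "\<beta> * p > 1" and "y > 0"
  shows "integrable lborel (crps_integrand (gbp_cdf 1 \<beta> p q) y)
    \<and> CRPS (gbp_cdf 1 \<beta> p q) y =
      q * Gamma (2 * \<beta> - 1 / p) * Gamma (1 + 1 / p) / Gamma (2 * \<beta>)
      + y * (1 - 2 * q powr (\<beta> * p) / (q powr p + y powr p) powr \<beta>
               * hyp2F1 1 \<beta> (1 + 1 / p) (y powr p / (y powr p + q powr p)))"
proof -
  note b = assms(1) and p = assms(2) and q = assms(3) and bp = assms(4) and y = assms(5)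
  define S where "S = Sf \<beta> p q"
  define A where "A = {0<..<y}"
  define B where "B = {(0::real)<..}"
  define V where "V = q * Gamma (2 * \<beta> - 1 / p) * Gamma (1 + 1 / p) / Gamma (2 * \<beta>)"
  have eq: "crps_integrand (gbp_cdf 1 \<beta> p q) y x =
     indicator A x *\<^sub>R (1::real) - 2 * (indicator A x *\<^sub>R S x) + indicator B x *\<^sub>R (S x)^2" for x
  proof (cases "x > 0")
    case True
    show ?thesis
      unfolding crps_integrand_def cdf_pos[OF b p q True] heaviside_def A_def B_def S_def
      using True by (auto simp: indicator_def power2_eq_square algebra_simps)
  next
    case False
    thus ?thesis
      unfolding crps_integrand_def cdf_nonpos[of x, OF leI[OF False]] heaviside_def A_def B_def S_def
      using y by (auto simp: indicator_def)
  qed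
  have I1: "set_integrable lborel A (\<lambda>x. 1::real)"
    unfolding A_def set_integrable_def
    by simp (rule integrable_real_indicator; use y in simp)
  have I2: "set_integrable lborel A S" unfolding A_def S_def by (rule S_integral(1)[OF b p q y])
  have I3: "set_integrable lborel B (\<lambda>x. (S x)^2)" unfolding B_def S_def by (rule S2_integral(1)[OF b p q bp])
  have fe: "crps_integrand (gbp_cdf 1 \<beta> p q) y =
     (\<lambda>x. indicator A x *\<^sub>R (1::real) - 2 * (indicator A x *\<^sub>R S x) + indicator B x *\<^sub>R (S x)^2)"
    using eq by (rule ext)
  have int: "integrable lborel (crps_integrand (gbp_cdf 1 \<beta> p q) y)"
    unfolding fe using I1 I2 I3 unfolding set_integrable_def by auto
  have v1: "(LINT x:A|lborel. (1::real)) = y"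
    unfolding A_def set_lebesgue_integral_def using y by simp
  have v2: "(LINT x:A|lborel. S x) = y * S y * Hs \<beta> p (zf p q y)"
    using S_integral(2)[OF b p q y] y unfolding A_def S_def
    by (simp add: interval_lebesgue_integral_def zero_ereal_def)
  have v3: "(LINT x:B|lborel. (S x)^2) = V"
    unfolding B_def S_def V_def by (rule S2_integral(2)[OF b p q bp])
  have crps: "CRPS (gbp_cdf 1 \<beta> p q) y = y - 2 * (y * S y * Hs \<beta> p (zf p q y)) + V"
  proof -
    have "CRPS (gbp_cdf 1 \<beta> p q) y = (LINT x:A|lborel. (1::real)) - 2 * (LINT x:A|lborel. S x) + (LINT x:B|lborel. (S x)^2)"
      unfolding CRPS_def fe set_lebesgue_integral_def
      using I1 I2 I3 unfolding set_integrable_def by simp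
    thus ?thesis using v1 v2 v3 by simp
  qed
  have Uy: "(y/q) powr p = y powr p / q powr p" using y q by (simp add: powr_divide)
  have qp: "q powr p > 0" "y powr p > 0" using q y by auto
  have zy: "zf p q y = y powr p / (y powr p + q powr p)"
    unfolding zf_def Uy using qp by (simp add: field_simps)
  have Sy: "S y = q powr (\<beta> * p) / (q powr p + y powr p) powr \<beta>"
  proof -
    have "1 + (y/q) powr p = (q powr p + y powr p) / q powr p" unfolding Uy using qp by (simp add: field_simps)
    hence "S y = ((q powr p + y powr p) / q powr p) powr (- \<beta>)" unfolding S_def Sf_def by simp
    also have "\<dots> = inverse (((q powr p + y powr p) / q powr p) powr \<beta>)" by (rule powr_minus)
    also have "((q powr p + y powr p) / q powr p) powr \<beta> = (q powr p + y powr p) powr \<beta> / (q powr p) powr \<beta>"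
      using qp by (simp add: powr_divide)
    also have "inverse ((q powr p + y powr p) powr \<beta> / (q powr p) powr \<beta>) = (q powr p) powr \<beta> / (q powr p + y powr p) powr \<beta>"
      by simp
    also have "(q powr p) powr \<beta> = q powr (\<beta> * p)" by (simp add: powr_powr mult.commute)
    finally show ?thesis .
  qed
  have Hy: "hyp2F1 1 \<beta> (1 + 1 / p) (y powr p / (y powr p + q powr p)) = Hs \<beta> p (zf p q y)"
    unfolding zy Hs_def hyp2F1_hc ..
  show ?thesis
    using int crps unfolding Sy Hy V_def by (simp add: algebra_simps)
qed

end
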